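(* Let $\alpha = (1,-1)$ denote the simple positive coroot of $SL_2$. Then there is an algebra map \begin{equation*} \mathsf{Y}_{-\alpha}(\mathfrak{sl}_2) \to \mathrm{Diff}(\mathbb{C}^\times) \end{equation*} uniquely determined by $T(x) \mapsto S(x)$, where \begin{equation*} S(x) = \begin{bmatrix} x - \varepsilon z\partial_z & z^{-1} \\ -z & 0 \end{bmatrix} \in \mathrm{Diff}(\mathbb{C}^\times) \otimes \mathrm{End}(V). \end{equation*}
   Context: Fix a generic parameter $\varepsilon$. Let $V \simeq \mathbb{C}^2$ be the defining representation of $\mathfrak{gl}_2$ and let $R(x) = \frac{x - \varepsilon P_{12}}{x-\varepsilon} \in \mathrm{End}(V_1\otimes V_2)(x)$, where $P_{12}$ is the permutation of tensor factors. For a dominant coweight $\mu=(\mu_1,\mu_2)$ of $GL_2$, the antidominantly shifted Yangian $\mathsf{Y}_{-\mu}(\mathfrak{gl}_2)$ is generated by the coefficients $T^{(r)}_{ij}$ of a matrix $T(x)$ with entries $T_{ij}(x) = \sum_{r\in\mathbb{Z}} T^{(r)}_{ij} x^{-r}$, subject to the RTT relations $R_{12}(x_1-x_2)T_1(x_1)T_2(x_2) = T_2(x_2)T_1(x_1)R_{12}(x_1-x_2)$, and requiring a Gauss decomposition $T(x) = \begin{bmatrix}1&0\\ f(x)&1\end{bmatrix}\begin{bmatrix} g_1(x)&0\\0&g_2(x)\end{bmatrix}\begin{bmatrix}1&e(x)\\0&1\end{bmatrix}$ with $f(x), e(x) = O(x^{-1})$ and $g_i(x) = x^{\mu_i} +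 O(x^{\mu_i-1})$ as $x\to\infty$. The quantum determinant $\mathrm{qdet}\,T(x) = T_{22}(x)T_{11}(x-\varepsilon) - T_{12}(x)T_{21}(x-\varepsilon)$ generates the center, and $\mathsf{Y}_{-\mu}(\mathfrak{sl}_2)$ is the quotient of $\mathsf{Y}_{-\mu}(\mathfrak{gl}_2)$ by $\mathrm{qdet}\,T(x)=1$. $\mathrm{Diff}(\mathbb{C}^\times)$ denotes polynomial differential operators in the coordinate $z$ on $\mathbb{C}^\times$. One checks that $S(x)$ satisfies the same RTT relation with this $R$-matrix, that its Gauss decomposition has $g_1(x) = x + \dots$, $g_2(x) = x^{-1}+\dots$, and that $\mathrm{qdet}\,S(x) = 1$. *)

theory Defs
  imports Complex_Main "HOL-Library.Poly_Mapping"
begin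

text \<open>Words in the generators form a (non-commutative) monoid under concatenation;
  the free algebra is the monoid algebra (finitely supported complex functions on words)
  with convolution product.\<close>

datatype 'g word = Word "'g list"

instantiation word :: (type) monoid_add
begin
definition zero_word :: "'g word" where "zero_word = Word []"
fun plus_word :: "'g word \<Rightarrow> 'g word \<Rightarrow> 'g word" where
  "plus_word (Word xs) (Word ys) = Word (xs @ ys)"
instance
proof
  fix a b c :: "'g word"
  show "a + b + c = a + (b + c)" by (cases a; cases b; cases c) simp
  show "0 + a = a" by (cases a) (simp add: zero_word_def)
  show "a + 0 = a" by (cases a) (simp add: zero_word_def)
qed
end

type_synonym 'g freealg = "'g word \<Rightarrow>\<^sub>0 complex"

definition fgen :: "'g \<Rightarrow> 'g freealg" where
  "fgen g = Poly_Mapping.single (Word [g]) 1"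

definition fscal :: "complex \<Rightarrow> 'g freealg" where
  "fscal c = Poly_Mapping.single 0 c"

text \<open>A series is given by its coefficient function m to the coefficient of x^m.
  The product is the Cauchy product; for series whose supports are bounded above
  (the only ones occurring here) the index set of the sum is finite.\<close>

definition lmul :: "(int \<Rightarrow> 'a::ring_1) \<Rightarrow> (int \<Rightarrow> 'a) \<Rightarrow> int \<Rightarrow> 'a" where
  "lmul a b n = (\<Sum>k\<in>{k. a k \<noteq> 0 \<and> b (n - k) \<noteq> 0}. a k * b (n - k))"

definition ladd :: "(int \<Rightarrow> 'a::ring_1) \<Rightarrow> (int \<Rightarrow> 'a) \<Rightarrow> int \<Rightarrow> 'a" where
  "ladd a b n = a n + b n"

definition lone :: "int \<Rightarrow> 'a::ring_1" where
  "lone n = (if n = 0 then 1 else 0)"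

text \<open>Substitution x \<mapsto> x - \<epsilon>:  x^m \<mapsto> (x-\<epsilon>)^m = \<Sum>_{k\<ge>0} (m gchoose k) (-\<epsilon>)^k x^{m-k}.\<close>

definition lshift :: "complex \<Rightarrow> (int \<Rightarrow> 'g freealg) \<Rightarrow> int \<Rightarrow> 'g freealg" where
  "lshift \<epsilon> a n = (\<Sum>m\<in>{m. n \<le> m \<and> a m \<noteq> 0}.
      fscal ((of_int m gchoose nat (m - n)) * (- \<epsilon>) ^ nat (m - n)) * a m)"

text \<open>2x2 matrices of series, indices in {1,2}.\<close>

definition mmul2 :: "(nat \<Rightarrow> nat \<Rightarrow> int \<Rightarrow> 'a::ring_1) \<Rightarrow> (nat \<Rightarrow> nat \<Rightarrow> int \<Rightarrow> 'a)
    \<Rightarrow> nat \<Rightarrow> nat \<Rightarrow> int \<Rightarrow> 'a" where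
  "mmul2 A B i j n = (\<Sum>k\<in>{1,2}. lmul (A i k) (B k j) n)"

section \<open>Two-variable series (coefficient of x1^a x2^b) and 4x4 matrices on V\<otimes>V\<close>

definition lmul2v :: "(int \<Rightarrow> int \<Rightarrow> 'a::ring_1) \<Rightarrow> (int \<Rightarrow> int \<Rightarrow> 'a) \<Rightarrow> int \<Rightarrow> int \<Rightarrow> 'a" where
  "lmul2v p q a b = (\<Sum>(c,d)\<in>{(c,d). p c d \<noteq> 0 \<and> q (a - c) (b - d) \<noteq> 0}.
      p c d * q (a - c) (b - d))"

definition mmul4 :: "(nat \<times> nat \<Rightarrow> nat \<times> nat \<Rightarrow> int \<Rightarrow> int \<Rightarrow> 'a::ring_1)
    \<Rightarrow> (nat \<times> nat \<Rightarrow> nat \<times> nat \<Rightarrow> int \<Rightarrow> int \<Rightarrow> 'a) \<Rightarrow> nat \<times> nat \<Rightarrow> nat \<times> nat \<Rightarrow> int \<Rightarrow> int \<Rightarrow> 'a" where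
  "mmul4 A B I J a b = (\<Sum>K\<in>{1,2}\<times>{1,2}. lmul2v (A I K) (B K J) a b)"

text \<open>T_1(x_1) = T(x_1) \<otimes> 1 and T_2(x_2) = 1 \<otimes> T(x_2), on basis (i,k) of V_1 \<otimes> V_2.\<close>

definition T1 :: "(nat \<Rightarrow> nat \<Rightarrow> int \<Rightarrow> 'a::ring_1) \<Rightarrow> nat \<times> nat \<Rightarrow> nat \<times> nat \<Rightarrow> int \<Rightarrow> int \<Rightarrow> 'a" where
  "T1 T I J a b = (if snd I = snd J \<and> b = 0 then T (fst I) (fst J) a else 0)"

definition T2 :: "(nat \<Rightarrow> nat \<Rightarrow> int \<Rightarrow> 'a::ring_1) \<Rightarrow> nat \<times> nat \<Rightarrow> nat \<times> nat \<Rightarrow> int \<Rightarrow> int \<Rightarrow> 'a" where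
  "T2 T I J a b = (if fst I = fst J \<and> a = 0 then T (snd I) (snd J) b else 0)"

text \<open>(x_1 - x_2 - \<epsilon>) R_{12}(x_1 - x_2) = (x_1 - x_2) Id - \<epsilon> P_{12}  (denominator cleared).\<close>

definition Rnum :: "complex \<Rightarrow> nat \<times> nat \<Rightarrow> nat \<times> nat \<Rightarrow> int \<Rightarrow> int \<Rightarrow> 'g freealg" where
  "Rnum \<epsilon> I J a b =
     (if I = J then (if a = 1 \<and> b = 0 then 1 else if a = 0 \<and> b = 1 then -1 else 0) else 0)
     - (if fst I = snd J \<and> snd I = fst J \<and> a = 0 \<and> b = 0 then fscal \<epsilon> else 0)"

text \<open>Generators: YE n = e^{(n+1)}, YF n = f^{(n+1)}, YG1 n = g_1^{(n+1)}, YG2 n = g_2^{(n+1)}, so that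
  e(x) = \<Sum>_{r\<ge>1} e^{(r)} x^{-r}, f likewise, g_i(x) = x^{\<mu>_i} + \<Sum>_{r\<ge>1} g_i^{(r)} x^{\<mu>_i - r}.\<close>

datatype ygen = YE nat | YF nat | YG1 nat | YG2 nat

type_synonym yfree = "ygen freealg"

definition e_ser :: "int \<Rightarrow> yfree" where
  "e_ser m = (if m \<le> -1 then fgen (YE (nat (- m - 1))) else 0)"

definition f_ser :: "int \<Rightarrow> yfree" where
  "f_ser m = (if m \<le> -1 then fgen (YF (nat (- m - 1))) else 0)"

definition g1_ser :: "int \<times> int \<Rightarrow> int \<Rightarrow> yfree" where
  "g1_ser \<mu> m = (if m = fst \<mu> then 1 else if m < fst \<mu> then fgen (YG1 (nat (fst \<mu> - m - 1))) else 0)"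

definition g2_ser :: "int \<times> int \<Rightarrow> int \<Rightarrow> yfree" where
  "g2_ser \<mu> m = (if m = snd \<mu> then 1 else if m < snd \<mu> then fgen (YG2 (nat (snd \<mu> - m - 1))) else 0)"

definition Fmat :: "nat \<Rightarrow> nat \<Rightarrow> int \<Rightarrow> yfree" where
  "Fmat i j = (if i = j then lone else if i = 2 \<and> j = 1 then f_ser else (\<lambda>_. 0))"

definition Emat :: "nat \<Rightarrow> nat \<Rightarrow> int \<Rightarrow> yfree" where
  "Emat i j = (if i = j then lone else if i = 1 \<and> j = 2 then e_ser else (\<lambda>_. 0))"

definition Dmat :: "int \<times> int \<Rightarrow> nat \<Rightarrow> nat \<Rightarrow> int \<Rightarrow> yfree" where
  "Dmat \<mu> i j = (if i = 1 \<and> j = 1 then g1_ser \<mu> else if i = 2 \<and> j = 2 then g2_ser \<mu> else (\<lambda>_. 0))"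

text \<open>T(x) = F(x) D(x) E(x); Tser \<mu> i j m is the coefficient of x^m in T_{ij}(x), i.e. T_{ij}^{(-m)}.\<close>

definition Tser :: "int \<times> int \<Rightarrow> nat \<Rightarrow> nat \<Rightarrow> int \<Rightarrow> yfree" where
  "Tser \<mu> = mmul2 (mmul2 Fmat (Dmat \<mu>)) Emat"

definition qdet_ser :: "complex \<Rightarrow> int \<times> int \<Rightarrow> int \<Rightarrow> yfree" where
  "qdet_ser \<epsilon> \<mu> = (\<lambda>n. lmul (Tser \<mu> 2 2) (lshift \<epsilon> (Tser \<mu> 1 1)) n
                     - lmul (Tser \<mu> 1 2) (lshift \<epsilon> (Tser \<mu> 2 1)) n)"

text \<open>Defining relations of Y_{-\<mu>}(sl_2) (elements of the free algebra which are set to zero):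
  all coefficients of the RTT relation and qdet T(x) = 1.\<close>

definition yangian_rels :: "complex \<Rightarrow> int \<times> int \<Rightarrow> yfree set" where
  "yangian_rels \<epsilon> \<mu> =
     {mmul4 (Rnum \<epsilon>) (mmul4 (T1 (Tser \<mu>)) (T2 (Tser \<mu>))) I J a b
      - mmul4 (mmul4 (T2 (Tser \<mu>)) (T1 (Tser \<mu>))) (Rnum \<epsilon>) I J a b
      | I J a b. I \<in> {1,2}\<times>{1,2} \<and> J \<in> {1,2}\<times>{1,2}}
   \<union> {qdet_ser \<epsilon> \<mu> n - lone n | n. True}"

section \<open>Diff(C^\<times>) as operators on formal Laurent series in z\<close>

type_synonym lseries = "int \<Rightarrow> complex"   \<comment> \<open>coefficient of z^n\<close>
type_synonym op = "lseries \<Rightarrow> lseries"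

definition op_scal :: "complex \<Rightarrow> op" where "op_scal c = (\<lambda>v n. c * v n)"
definition op_z :: op where "op_z = (\<lambda>v n. v (n - 1))"
definition op_zinv :: op where "op_zinv = (\<lambda>v n. v (n + 1))"
definition op_d :: op where "op_d = (\<lambda>v n. of_int (n + 1) * v (n + 1))"
definition op_add :: "op \<Rightarrow> op \<Rightarrow> op" where "op_add A B = (\<lambda>v n. A v n + B v n)"

inductive_set diffops :: "op set" where
  scal: "op_scal c \<in> diffops"
| z: "op_z \<in> diffops"
| zinv: "op_zinv \<in> diffops"
| d: "op_d \<in> diffops"
| add: "A \<in> diffops \<Longrightarrow> B \<in> diffops \<Longrightarrow> op_add A B \<in> diffops"
| comp: "A \<in> diffops \<Longrightarrow> B \<in> diffops \<Longrightarrow> A \<circ> B \<in> diffops"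

text \<open>S(x) = [[x - \<epsilon> z \<partial>_z, z^{-1}], [-z, 0]]; Sser \<epsilon> i j m = coefficient of x^m in S_{ij}(x).\<close>

definition Sser :: "complex \<Rightarrow> nat \<Rightarrow> nat \<Rightarrow> int \<Rightarrow> op" where
  "Sser \<epsilon> i j m =
     (if i = 1 \<and> j = 1 then (if m = 1 then id else if m = 0 then op_scal (- \<epsilon>) \<circ> op_z \<circ> op_d else op_scal 0)
      else if i = 1 \<and> j = 2 then (if m = 0 then op_zinv else op_scal 0)
      else if i = 2 \<and> j = 1 then (if m = 0 then op_scal (-1) \<circ> op_z else op_scal 0)
      else op_scal 0)"

definition alg_hom :: "('g freealg \<Rightarrow> op) \<Rightarrow> bool" where
  "alg_hom \<phi> \<longleftrightarrow> \<phi> 1 = id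
     \<and> (\<forall>p q. \<phi> (p + q) = op_add (\<phi> p) (\<phi> q))
     \<and> (\<forall>c p. \<phi> (fscal c * p) = op_scal c \<circ> \<phi> p)
     \<and> (\<forall>p q. \<phi> (p * q) = \<phi> p \<circ> \<phi> q)"

text \<open>Algebra maps Y_{-\<mu>}(sl_2) \<rightarrow> Diff(C^\<times>) are exactly algebra maps from the free algebra into
  Diff(C^\<times>) that vanish on the defining relations.\<close>

definition yangian_map_to_diff :: "complex \<Rightarrow> int \<times> int \<Rightarrow> (yfree \<Rightarrow> op) \<Rightarrow> bool" where
  "yangian_map_to_diff \<epsilon> \<mu> \<phi> \<longleftrightarrow> alg_hom \<phi> \<and> (\<forall>p. \<phi> p \<in> diffops)
     \<and> (\<forall>r\<in>yangian_rels \<epsilon> \<mu>. \<phi> r = op_scal 0)"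

end

theory Submission
  imports Defs "HOL-Library.Function_Algebras"
begin

lemma lmul_finite:
  fixes a b :: "int \<Rightarrow> 'a::ring_1"
  assumes "finite F" "{k. a k \<noteq> 0 \<and> b (n-k) \<noteq> 0} \<subseteq> F"
  shows "lmul a b n = (\<Sum>k\<in>F. a k * b (n-k))"
  unfolding lmul_def
  by (rule sum.mono_neutral_left[OF assms]) auto

lemma lmul_ub:
  fixes a b :: "int \<Rightarrow> 'a::ring_1"
  assumes "\<forall>k>A. a k = 0" "\<forall>k>B. b k = 0"
  shows "lmul a b n = (\<Sum>k\<in>{n-B..A}. a k * b (n-k))"
  apply (rule lmul_finite)
  using assms by force+

lemma lmul_ub_zero:
  fixes a b :: "int \<Rightarrow> 'a::ring_1"
  assumes "\<forall>k>A. a k = 0" "\<forall>k>B. b k = 0" "n > A + B"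
  shows "lmul a b n = 0"
  using lmul_ub[OF assms(1,2), of n] assms(3) by simp

lemma lmul_lone_left[simp]: "lmul lone (b::int\<Rightarrow>'a::ring_1) n = b n"
  by (subst lmul_finite[where F="{0}"]) (auto simp: lone_def)
lemma lmul_lone_right[simp]: "lmul (a::int\<Rightarrow>'a::ring_1) lone n = a n"
  by (subst lmul_finite[where F="{n}"]) (auto simp: lone_def)
lemma lmul_zero_left[simp]: "lmul (\<lambda>_. 0) (b::int\<Rightarrow>'a::ring_1) n = 0"
  by (simp add: lmul_def)
lemma lmul_zero_right[simp]: "lmul (a::int\<Rightarrow>'a::ring_1) (\<lambda>_. 0) n = 0"
  by (simp add: lmul_def)

lemma lmul2v_finite:
  fixes p q :: "int \<Rightarrow> int \<Rightarrow> 'a::ring_1"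
  assumes "finite F" "{(c,d). p c d \<noteq> 0 \<and> q (a - c) (b - d) \<noteq> 0} \<subseteq> F"
  shows "lmul2v p q a b = (\<Sum>(c,d)\<in>F. p c d * q (a - c) (b - d))"
  unfolding lmul2v_def
  by (rule sum.mono_neutral_left[OF assms]) auto

lemma lshift_ub:
  assumes "\<forall>k>A. a k = 0"
  shows "lshift \<epsilon> a n = (\<Sum>m\<in>{n..A}. fscal ((of_int m gchoose nat (m - n)) * (- \<epsilon>) ^ nat (m - n)) * a m)"
  unfolding lshift_def
  by (rule sum.mono_neutral_left) (use assms in force)+

lemma Tser11: "Tser \<mu> 1 1 n = g1_ser \<mu> n"
  by (simp add: Tser_def mmul2_def Fmat_def Dmat_def Emat_def)
lemma Tser12: "Tser \<mu> 1 2 n = lmul (g1_ser \<mu>) e_ser n"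
proof -
  have "mmul2 Fmat (Dmat \<mu>) 1 1 = g1_ser \<mu>"
    by (rule ext) (simp add: mmul2_def Fmat_def Dmat_def)
  moreover have "mmul2 Fmat (Dmat \<mu>) 1 2 = (\<lambda>_. 0)"
    by (rule ext) (simp add: mmul2_def Fmat_def Dmat_def)
  ultimately show ?thesis
    by (simp add: Tser_def[of \<mu>] mmul2_def[of "mmul2 Fmat (Dmat \<mu>)"] Emat_def)
qed
lemma Tser21: "Tser \<mu> 2 1 n = lmul f_ser (g1_ser \<mu>) n"
  by (simp add: Tser_def mmul2_def Fmat_def Dmat_def Emat_def)
lemma Tser22: "Tser \<mu> 2 2 n = lmul (Tser \<mu> 2 1) e_ser n + g2_ser \<mu> n"
proof -
  have "mmul2 Fmat (Dmat \<mu>) 2 1 = Tser \<mu> 2 1"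
    by (rule ext) (simp add: Tser_def mmul2_def Fmat_def Dmat_def Emat_def)
  moreover have "mmul2 Fmat (Dmat \<mu>) 2 2 = g2_ser \<mu>"
    by (rule ext) (simp add: Tser_def mmul2_def Fmat_def Dmat_def Emat_def)
  ultimately show ?thesis
    by (simp add: Tser_def[of \<mu>] mmul2_def[of "mmul2 Fmat (Dmat \<mu>)"] Emat_def)
qed

definition Th :: "complex \<Rightarrow> nat \<Rightarrow> op" where
  "Th \<epsilon> n = (op_scal \<epsilon> \<circ> op_z \<circ> op_d) ^^ n"

lemma Th_apply: "Th \<epsilon> n v m = (\<epsilon> * of_int m) ^ n * v m"
  by (induction n arbitrary: v) (simp_all add: Th_def op_scal_def op_z_def op_d_def)

definition gen_op :: "complex \<Rightarrow> ygen \<Rightarrow> op" where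
  "gen_op \<epsilon> g = (case g of YE n \<Rightarrow> Th \<epsilon> n \<circ> op_zinv
    | YF n \<Rightarrow> op_scal (-1) \<circ> op_z \<circ> Th \<epsilon> n
    | YG1 n \<Rightarrow> (if n = 0 then op_scal (-\<epsilon>) \<circ> op_z \<circ> op_d else op_scal 0)
    | YG2 n \<Rightarrow> op_z \<circ> Th \<epsilon> (Suc n) \<circ> op_zinv)"

lemma gen_op_YE: "gen_op \<epsilon> (YE n) v m = (\<epsilon> * of_int m) ^ n * v (m + 1)"
  by (simp add: gen_op_def Th_apply op_zinv_def)
lemma gen_op_YF: "gen_op \<epsilon> (YF n) v m = - ((\<epsilon> * of_int (m - 1)) ^ n * v (m - 1))"
  by (simp add: gen_op_def Th_apply op_z_def op_scal_def)
lemma gen_op_YG1: "gen_op \<epsilon> (YG1 n) v m = (if n = 0 then - \<epsilon> * of_int m * v m else 0)"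
  by (simp add: gen_op_def op_z_def op_d_def op_scal_def)
lemma gen_op_YG2: "gen_op \<epsilon> (YG2 n) v m = (\<epsilon> * of_int (m - 1)) ^ Suc n * v m"
  by (simp add: gen_op_def Th_apply op_zinv_def op_z_def)

fun word_op :: "complex \<Rightarrow> ygen word \<Rightarrow> op" where
  "word_op \<epsilon> (Word gs) = foldr (\<lambda>g A. gen_op \<epsilon> g \<circ> A) gs id"

definition lin :: "op \<Rightarrow> bool" where
  "lin A \<longleftrightarrow> (\<forall>v w. A (\<lambda>n. v n + w n) = (\<lambda>n. A v n + A w n))
       \<and> (\<forall>c v. A (\<lambda>n. c * v n) = (\<lambda>n. c * A v n))"

lemma lin_comp: "lin A \<Longrightarrow> lin B \<Longrightarrow> lin (A \<circ> B)"
  by (simp add: lin_def)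
lemma lin_id: "lin id" by (simp add: lin_def)
lemma lin_id': "lin (\<lambda>a. a)" by (simp add: lin_def)
lemma lin_comp': "lin A \<Longrightarrow> lin B \<Longrightarrow> lin (\<lambda>x. A (B x))"
  by (simp add: lin_def)
lemma lin_scal: "lin (op_scal c)" by (simp add: lin_def op_scal_def fun_eq_iff algebra_simps)
lemma lin_z: "lin op_z" by (simp add: lin_def op_z_def)
lemma lin_zinv: "lin op_zinv" by (simp add: lin_def op_zinv_def)
lemma lin_d: "lin op_d" by (simp add: lin_def op_d_def fun_eq_iff algebra_simps)
lemma lin_Th: "lin (Th \<epsilon> n)"
  unfolding lin_def
  by (auto simp: Th_apply distrib_left)
lemma lin_gen_op: "lin (gen_op \<epsilon> g)"
  by (cases g) (simp_all add: gen_op_def lin_comp lin_scal lin_z lin_zinv lin_d lin_Th)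
lemma lin_word_op: "lin (word_op \<epsilon> w)"
proof (cases w)
  case (Word gs) show ?thesis unfolding Word
    by (induction gs) (simp_all add: lin_id' lin_comp' lin_gen_op)
qed

lemma lin_zero:
  assumes "lin A" shows "A (\<lambda>n. 0) = (\<lambda>n. 0)"
proof -
  have "\<forall>c v. A (\<lambda>n. c * v n) = (\<lambda>n. c * A v n)"
    using assms unfolding lin_def by blast
  then have "A (\<lambda>n. (0::complex) * (\<lambda>_. 0) n) = (\<lambda>n. 0 * A (\<lambda>_. 0) n)"
    by (erule_tac x=0 in allE, erule_tac x="\<lambda>_. 0" in allE)
  then show ?thesis by (simp only: mult_zero_left)
qed
lemma lin_add:
  assumes "lin A" shows "A (\<lambda>n. v n + w n) m = A v m + A w m"
proof -
  have "A (\<lambda>n. v n + w n) = (\<lambda>n. A v n + A w n)"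
    using assms unfolding lin_def by blast
  from fun_cong[OF this, of m] show ?thesis by (simp only:)
qed
lemma lin_mult:
  assumes "lin A" shows "A (\<lambda>n. c * v n) m = c * A v m"
proof -
  have "A (\<lambda>n. c * v n) = (\<lambda>n. c * A v n)"
    using assms unfolding lin_def by blast
  from fun_cong[OF this, of m] show ?thesis by (simp only:)
qed
lemma lin_sum:
  assumes "lin A" shows "A (\<lambda>n. \<Sum>i\<in>F. f i n) m = (\<Sum>i\<in>F. A (f i) m)"
proof (induction F rule: infinite_finite_induct)
  case (infinite F) then show ?case using lin_zero[OF assms] by simp
next
  case empty then show ?case using lin_zero[OF assms] by simp
next
  case (insert x F) then show ?case by (simp add: lin_add[OF assms])
qed

lemma foldr_comp: "foldr (\<lambda>g A. gen_op \<epsilon> g \<circ> A) gs B = foldr (\<lambda>g A. gen_op \<epsilon> g \<circ> A) gs id \<circ> B"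
  by (induction gs) auto

lemma word_op_plus: "word_op \<epsilon> (a + b) = word_op \<epsilon> a \<circ> word_op \<epsilon> b"
  by (cases a; cases b) (simp add: foldr_comp[of _ _ "foldr _ _ id"])

lemma word_op_zero: "word_op \<epsilon> 0 = id"
  by (simp add: zero_word_def)

definition phi :: "complex \<Rightarrow> yfree \<Rightarrow> op" where
  "phi \<epsilon> p = (\<lambda>v n. \<Sum>w\<in>Poly_Mapping.keys p. Poly_Mapping.lookup p w * word_op \<epsilon> w v n)"

lemma phi_super: "finite U \<Longrightarrow> Poly_Mapping.keys p \<subseteq> U \<Longrightarrow> phi \<epsilon> p v n = (\<Sum>w\<in>U. Poly_Mapping.lookup p w * word_op \<epsilon> w v n)"
  unfolding phi_def
  by (rule sum.mono_neutral_left) (auto simp: in_keys_iff)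

lemma phi_add: "phi \<epsilon> (p + q) v n = phi \<epsilon> p v n + phi \<epsilon> q v n"
proof -
  let ?U = "Poly_Mapping.keys p \<union> Poly_Mapping.keys q"
  have "Poly_Mapping.keys (p + q) \<subseteq> ?U" by (rule keys_add)
  then show ?thesis
    by (simp add: phi_super[of ?U] lookup_add distrib_right sum.distrib)
qed

lemma phi_zero: "phi \<epsilon> 0 = (\<lambda>v n. 0)"
  by (simp add: phi_def)

lemma phi_single: "phi \<epsilon> (Poly_Mapping.single w c) = (\<lambda>v n. c * word_op \<epsilon> w v n)"
  by (cases "c = 0") (auto simp: phi_def)

lemma pm_induct[case_names zero step]:
  assumes "P 0" "\<And>a b f. P f \<Longrightarrow> P (Poly_Mapping.single a b + f)"
  shows "P f"
proof (induction f rule: update_induct)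
  case const then show ?case by (rule assms(1))
next
  case (update f a b)
  have "Poly_Mapping.update a b f = Poly_Mapping.single a b + f"
    using update(1)
    by (intro poly_mapping_eqI) (auto simp: lookup_update lookup_add lookup_single in_keys_iff when_def)
  then show ?case using assms(2) update(3) by simp
qed

lemma lin_phi: "lin (phi \<epsilon> p)"
  unfolding lin_def phi_def
  by (simp add: lin_add[OF lin_word_op] lin_mult[OF lin_word_op] sum.distrib
        distrib_left sum_distrib_left mult.left_commute fun_eq_iff)

lemma phi_mult_single: "phi \<epsilon> (Poly_Mapping.single a c * q) = phi \<epsilon> (Poly_Mapping.single a c) \<circ> phi \<epsilon> q"
proof (induction q rule: pm_induct)
  case zero then show ?case
    by (simp add: phi_zero phi_single lin_zero[OF lin_word_op] fun_eq_iff)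
next
  case (step b d f)
  have "Poly_Mapping.single a c * (Poly_Mapping.single b d + f)
       = Poly_Mapping.single (a + b) (c * d) + Poly_Mapping.single a c * f"
    by (simp add: distrib_left mult_single)
  then show ?case using step
    by (simp add: fun_eq_iff phi_add phi_single word_op_plus lin_add[OF lin_word_op]
        lin_mult[OF lin_word_op] algebra_simps)
qed

lemma phi_mult: "phi \<epsilon> (p * q) = phi \<epsilon> p \<circ> phi \<epsilon> q"
proof (induction p rule: pm_induct)
  case zero then show ?case by (simp add: phi_zero fun_eq_iff)
next
  case (step a b f)
  then show ?case
    by (simp add: distrib_right fun_eq_iff phi_add phi_mult_single)
qed

lemma alg_hom_phi: "alg_hom (phi \<epsilon>)"
  unfolding alg_hom_def
proof (intro conjI allI)
  show "phi \<epsilon> 1 = id"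
    by (simp add: phi_single fun_eq_iff word_op_zero flip: single_one)
  show "phi \<epsilon> (p + q) = op_add (phi \<epsilon> p) (phi \<epsilon> q)" for p q
    by (simp add: op_add_def phi_add fun_eq_iff)
  show "phi \<epsilon> (fscal c * p) = op_scal c \<circ> phi \<epsilon> p" for c p
    by (simp add: fscal_def phi_mult phi_single word_op_zero op_scal_def fun_eq_iff)
  show "phi \<epsilon> (p * q) = phi \<epsilon> p \<circ> phi \<epsilon> q" for p q
    by (rule phi_mult)
qed

lemma id_diffops: "id \<in> diffops"
proof -
  have "id = op_scal 1" by (simp add: op_scal_def fun_eq_iff)
  then show ?thesis by (metis diffops.scal)
qed

lemma Th_diffops: "Th \<epsilon> n \<in> diffops"
proof (induction n)
  case 0 then show ?case by (simp only: Th_def funpow.simps(1) id_diffops)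
next
  case (Suc n) then show ?case unfolding Th_def funpow.simps(2)
    by (intro diffops.comp diffops.intros)
qed

lemma gen_op_diffops: "gen_op \<epsilon> g \<in> diffops"
  by (cases g) (auto simp: gen_op_def Th_diffops intro!: diffops.intros)

lemma word_op_diffops: "word_op \<epsilon> w \<in> diffops"
proof (cases w)
  case (Word gs) then show ?thesis
    by (induction gs arbitrary: w) (auto simp: id_diffops gen_op_diffops intro!: diffops.comp)
qed

lemma sum_diffops: "finite W \<Longrightarrow> (\<lambda>v n. \<Sum>w\<in>W. c w * word_op \<epsilon> w v n) \<in> diffops"
proof (induction W rule: finite_induct)
  case empty
  have "(\<lambda>v n. 0) = op_scal 0" by (simp add: op_scal_def fun_eq_iff)
  then show ?case by (simp add: diffops.scal)
next
  case (insert x F)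
  have "(\<lambda>v n. \<Sum>w\<in>insert x F. c w * word_op \<epsilon> w v n)
     = op_add (op_scal (c x) \<circ> word_op \<epsilon> x) (\<lambda>v n. \<Sum>w\<in>F. c w * word_op \<epsilon> w v n)"
    using insert by (simp add: op_add_def op_scal_def fun_eq_iff)
  then show ?case using insert
    by (simp add: diffops.add diffops.comp diffops.scal word_op_diffops)
qed

lemma phi_diffops: "phi \<epsilon> p \<in> diffops"
  unfolding phi_def by (rule sum_diffops) simp

lemma hom_zero: "alg_hom \<chi> \<Longrightarrow> \<chi> 0 = (\<lambda>v n. 0)"
proof -
  assume h: "alg_hom \<chi>"
  have "\<chi> (0 + 0) = op_add (\<chi> 0) (\<chi> 0)" using h unfolding alg_hom_def by blast
  then have "\<chi> 0 = op_add (\<chi> 0) (\<chi> 0)" by simp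
  then have "\<And>v n. \<chi> 0 v n = \<chi> 0 v n + \<chi> 0 v n" by (simp add: op_add_def fun_eq_iff)
  then show ?thesis by (simp add: fun_eq_iff)
qed

lemma hom_add: "alg_hom \<chi> \<Longrightarrow> \<chi> (p + q) v n = \<chi> p v n + \<chi> q v n"
  by (simp add: alg_hom_def op_add_def)

lemma hom_mult: "alg_hom \<chi> \<Longrightarrow> \<chi> (p * q) = \<chi> p \<circ> \<chi> q"
  by (simp add: alg_hom_def)

lemma hom_uminus: "alg_hom \<chi> \<Longrightarrow> \<chi> (- p) v n = - \<chi> p v n"
proof -
  assume h: "alg_hom \<chi>"
  have "\<chi> (p + - p) v n = 0" using hom_zero[OF h] by simp
  then show ?thesis using hom_add[OF h, of p "-p"] by (simp add: eq_neg_iff_add_eq_0 add.commute)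
qed

lemma hom_diff: "alg_hom \<chi> \<Longrightarrow> \<chi> (p - q) v n = \<chi> p v n - \<chi> q v n"
  using hom_add[of \<chi> p "-q"] hom_uminus[of \<chi> q] by simp

lemma hom_sum: "alg_hom \<chi> \<Longrightarrow> \<chi> (\<Sum>i\<in>F. x i) v n = (\<Sum>i\<in>F. \<chi> (x i) v n)"
  by (induction F rule: infinite_finite_induct) (simp_all add: hom_zero hom_add)

definition agree :: "(yfree \<Rightarrow> op) \<Rightarrow> (yfree \<Rightarrow> op) \<Rightarrow> yfree \<Rightarrow> bool" where
  "agree \<chi>1 \<chi>2 p \<longleftrightarrow> \<chi>1 p = \<chi>2 p"

locale two_homs =
  fixes \<chi>1 \<chi>2 :: "yfree \<Rightarrow> op"
  assumes h1: "alg_hom \<chi>1" and h2: "alg_hom \<chi>2"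
begin

abbreviation "A \<equiv> agree \<chi>1 \<chi>2"

lemma A_add: "A p \<Longrightarrow> A q \<Longrightarrow> A (p + q)"
  by (simp add: agree_def fun_eq_iff hom_add[OF h1] hom_add[OF h2])
lemma A_diff: "A p \<Longrightarrow> A q \<Longrightarrow> A (p - q)"
  by (simp add: agree_def fun_eq_iff hom_diff[OF h1] hom_diff[OF h2])
lemma A_mult: "A p \<Longrightarrow> A q \<Longrightarrow> A (p * q)"
  by (simp add: agree_def hom_mult[OF h1] hom_mult[OF h2])
lemma A_zero: "A 0"
  by (simp add: agree_def hom_zero[OF h1] hom_zero[OF h2])
lemma A_one: "A 1"
  using h1 h2 by (simp add: agree_def alg_hom_def)
lemma A_sum: "(\<And>i. i \<in> F \<Longrightarrow> A (x i)) \<Longrightarrow> A (\<Sum>i\<in>F. x i)"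
  by (simp add: agree_def fun_eq_iff hom_sum[OF h1] hom_sum[OF h2])
lemma A_fscal: "A p \<Longrightarrow> A (fscal c * p)"
proof -
  assume "A p"
  have "\<chi>1 (fscal c * p) = op_scal c \<circ> \<chi>1 p" using h1 unfolding alg_hom_def by blast
  moreover have "\<chi>2 (fscal c * p) = op_scal c \<circ> \<chi>2 p" using h2 unfolding alg_hom_def by blast
  ultimately show ?thesis using \<open>A p\<close> by (simp add: agree_def)
qed
lemma A_lmul: "(\<And>k. A (a k)) \<Longrightarrow> (\<And>k. A (b k)) \<Longrightarrow> A (lmul a b n)"
  unfolding lmul_def by (intro A_sum A_mult) auto

lemma A_single_word: "(\<And>g. A (fgen g)) \<Longrightarrow> A (Poly_Mapping.single (Word gs) 1)"
proof (induction gs)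
  case Nil then show ?case using A_one by (simp add: zero_word_def[symmetric])
next
  case (Cons g gs)
  have "Poly_Mapping.single (Word (g # gs)) (1::complex) = fgen g * Poly_Mapping.single (Word gs) 1"
    by (simp add: fgen_def mult_single)
  then show ?case using Cons by (simp add: A_mult)
qed

lemma A_all: assumes "\<And>g. A (fgen g)" shows "\<chi>1 = \<chi>2"
proof
  fix p
  show "\<chi>1 p = \<chi>2 p" unfolding agree_def[symmetric]
  proof (induction p rule: pm_induct)
    case zero then show ?case by (rule A_zero)
  next
    case (step a b f)
    obtain gs where a: "a = Word gs" by (cases a)
    have "Poly_Mapping.single a b = fscal b * Poly_Mapping.single (Word gs) 1"
      by (simp add: fscal_def mult_single a)
    then show ?case using step A_single_word[OF assms] by (simp add: A_add A_fscal)
  qed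
qed

end

lemma ub_g1: "\<forall>k>1. g1_ser (1,-1) k = 0" by (simp add: g1_ser_def)
lemma ub_e: "\<forall>k>-1. e_ser k = 0" by (simp add: e_ser_def)
lemma ub_f: "\<forall>k>-1. f_ser k = 0" by (simp add: f_ser_def)
lemma ub_g2: "\<forall>k>-1. g2_ser (1,-1) k = 0" by (simp add: g2_ser_def)

lemma e_gen: "e_ser (- int n - 1) = fgen (YE n)" by (simp add: e_ser_def)
lemma f_gen: "f_ser (- int n - 1) = fgen (YF n)" by (simp add: f_ser_def)
lemma g1_gen: "g1_ser (1,-1) (- int n) = fgen (YG1 n)" by (simp add: g1_ser_def)
lemma g2_gen: "g2_ser (1,-1) (- int n - 2) = fgen (YG2 n)" by (simp add: g2_ser_def)

lemma T12_split: "Tser (1,-1) 1 2 (- int n) = fgen (YE n)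
    + (\<Sum>k\<in>{- int n + 1..0}. g1_ser (1,-1) k * e_ser (- int n - k))"
proof -
  have "Tser (1,-1) 1 2 (- int n) = (\<Sum>k\<in>{- int n + 1..1}. g1_ser (1,-1) k * e_ser (- int n - k))"
    unfolding Tser12 lmul_ub[OF ub_g1 ub_e] by simp
  also have "{- int n + 1..1} = insert 1 {- int n + 1..0}" by auto
  also have "(\<Sum>k\<in>insert 1 {- int n + 1..0}. g1_ser (1,-1) k * e_ser (- int n - k))
     = g1_ser (1,-1) 1 * e_ser (- int n - 1) + (\<Sum>k\<in>{- int n + 1..0}. g1_ser (1,-1) k * e_ser (- int n - k))"
    by (simp add: sum.insert)
  finally show ?thesis by (simp add: g1_ser_def e_gen)
qed

lemma T21_split: "Tser (1,-1) 2 1 (- int n) = fgen (YF n)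
    + (\<Sum>k\<in>{- int n..-1}. f_ser k * g1_ser (1,-1) (- int n - k))"
proof -
  have "Tser (1,-1) 2 1 (- int n) = (\<Sum>k\<in>{- int n - 1..-1}. f_ser k * g1_ser (1,-1) (- int n - k))"
    unfolding Tser21 lmul_ub[OF ub_f ub_g1] by simp
  also have "{- int n - 1..-1} = insert (- int n - 1) {- int n..-1}" by auto
  also have "(\<Sum>k\<in>insert (- int n - 1) {- int n..-1}. f_ser k * g1_ser (1,-1) (- int n - k))
     = f_ser (- int n - 1) * g1_ser (1,-1) 1 + (\<Sum>k\<in>{- int n..-1}. f_ser k * g1_ser (1,-1) (- int n - k))"
    by (simp add: sum.insert)
  finally show ?thesis by (simp add: g1_ser_def f_gen)
qed

context two_homs begin

lemma uniq:
  assumes T: "\<forall>i\<in>{1,2}. \<forall>j\<in>{1,2}. \<forall>m. \<chi>1 (Tser (1,-1) i j m) = \<chi>2 (Tser (1,-1) i j m)"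
  shows "\<chi>1 = \<chi>2"
proof (rule A_all)
  have AT: "\<And>i j m. i \<in> {1,2} \<Longrightarrow> j \<in> {1,2} \<Longrightarrow> A (Tser (1,-1) i j m)"
    unfolding agree_def using T by blast
  have AG1: "\<And>m. A (g1_ser (1,-1) m)"
  proof -
    have "A (Tser (1,-1) 1 1 m)" for m by (rule AT) auto
    then show "A (g1_ser (1,-1) m)" for m unfolding Tser11 .
  qed
  have AE: "A (fgen (YE n))" for n
  proof (induction n rule: less_induct)
    case (less n)
    have Ej: "A (e_ser j)" if "j \<ge> - int n" for j
    proof (cases "j > -1")
      case True then show ?thesis by (simp add: e_ser_def A_zero)
    next
      case False
      then have "e_ser j = fgen (YE (nat (- j - 1)))" by (simp add: e_ser_def)
      moreover have "nat (- j - 1) < n" using False that by linarith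
      ultimately show ?thesis using less by simp
    qed
    have "fgen (YE n) = Tser (1,-1) 1 2 (- int n)
        - (\<Sum>k\<in>{- int n + 1..0}. g1_ser (1,-1) k * e_ser (- int n - k))"
      unfolding T12_split by simp
    also have "A \<dots>"
      by (intro A_diff AT A_sum A_mult AG1 Ej) auto
    finally show ?case .
  qed
  have AEs: "A (e_ser j)" for j
    by (cases "j > -1") (auto simp: e_ser_def A_zero AE)
  have AF: "A (fgen (YF n))" for n
  proof (induction n rule: less_induct)
    case (less n)
    have Fj: "A (f_ser j)" if "j \<ge> - int n" for j
    proof (cases "j > -1")
      case True then show ?thesis by (simp add: f_ser_def A_zero)
    next
      case False
      then have "f_ser j = fgen (YF (nat (- j - 1)))" by (simp add: f_ser_def)
      moreover have "nat (- j - 1) < n" using False that by linarith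
      ultimately show ?thesis using less by simp
    qed
    have "fgen (YF n) = Tser (1,-1) 2 1 (- int n)
        - (\<Sum>k\<in>{- int n..-1}. f_ser k * g1_ser (1,-1) (- int n - k))"
      unfolding T21_split by simp
    also have "A \<dots>"
      by (intro A_diff AT A_sum A_mult AG1 Fj) auto
    finally show ?case .
  qed
  fix g
  show "A (fgen g)"
  proof (cases g)
    case (YE n) then show ?thesis using AE by simp
  next
    case (YF n) then show ?thesis using AF by simp
  next
    case (YG1 n) then show ?thesis using AG1[of "- int n"] by (simp add: g1_gen)
  next
    case (YG2 n)
    have "fgen (YG2 n) = Tser (1,-1) 2 2 (- int n - 2) - lmul (Tser (1,-1) 2 1) e_ser (- int n - 2)"
      unfolding Tser22 g2_gen by simp
    also have "A \<dots>"
      by (intro A_diff AT A_lmul AEs) auto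
    finally show ?thesis using YG2 by simp
  qed
qed

end

declare One_nat_def [simp del]

lemma phi_fgen: "phi \<epsilon> (fgen g) = gen_op \<epsilon> g"
  by (simp add: fgen_def phi_single fun_eq_iff)

lemma phi_mult_apply: "phi \<epsilon> (p * q) v n = phi \<epsilon> p (phi \<epsilon> q v) n"
  by (simp add: phi_mult)

lemma phi_one_apply: "phi \<epsilon> 1 v n = v n"
  using alg_hom_phi[of \<epsilon>] by (simp add: alg_hom_def)

lemma phi_sum_apply: "phi \<epsilon> (\<Sum>i\<in>F. x i) v n = (\<Sum>i\<in>F. phi \<epsilon> (x i) v n)"
  by (rule hom_sum[OF alg_hom_phi])

lemma phi_zero_apply: "phi \<epsilon> 0 v n = 0"
  by (simp add: phi_zero)

lemma phi_g1: "phi \<epsilon> (g1_ser (1,-1) k) v n = (if k = 1 then v n else if k = 0 then - \<epsilon> * of_int n * v n else 0)"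
proof -
  consider "k = 1" | "k > 1" | "k < 1" by linarith
  then show ?thesis
  proof cases
    case 1 then show ?thesis by (simp add: g1_ser_def phi_one_apply)
  next
    case 2 then show ?thesis by (simp add: g1_ser_def phi_zero_apply)
  next
    case 3
    then have "g1_ser (1,-1) k = fgen (YG1 (nat (- k)))" by (simp add: g1_ser_def)
    with 3 show ?thesis by (simp add: phi_fgen gen_op_YG1)
  qed
qed

lemma phi_g1_fun: "phi \<epsilon> (g1_ser (1,-1) k) = (\<lambda>v n. if k = 1 then v n else if k = 0 then - \<epsilon> * of_int n * v n else 0)"
  by (simp add: fun_eq_iff phi_g1)

lemma phi_apply_zero: "phi \<epsilon> p (\<lambda>n. 0) n = 0"
  using lin_zero[OF lin_phi] by metis

lemma phi_e: "phi \<epsilon> (e_ser k) v n = (if k \<le> -1 then (\<epsilon> * of_int n) ^ nat (- k - 1) * v (n + 1) else 0)"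
  by (simp add: e_ser_def phi_fgen gen_op_YE phi_zero_apply)

lemma phi_f: "phi \<epsilon> (f_ser k) v n = (if k \<le> -1 then - ((\<epsilon> * of_int (n - 1)) ^ nat (- k - 1) * v (n - 1)) else 0)"
  by (simp add: f_ser_def phi_fgen gen_op_YF phi_zero_apply)

lemma phi_g2: "phi \<epsilon> (g2_ser (1,-1) k) v n = (if k = -1 then v n else if k < -1 then (\<epsilon> * of_int (n - 1)) ^ nat (- k - 1) * v n else 0)"
proof -
  consider "k = -1" | "k > -1" | "k < -1" by linarith
  then show ?thesis
  proof cases
    case 1 then show ?thesis by (simp add: g2_ser_def phi_one_apply)
  next
    case 2 then show ?thesis by (simp add: g2_ser_def phi_zero_apply)
  next
    case 3
    then have "g2_ser (1,-1) k = fgen (YG2 (nat (- 2 - k)))" by (simp add: g2_ser_def)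
    moreover have "Suc (nat (- 2 - k)) = nat (- k - 1)" using 3 by simp
    ultimately show ?thesis using 3 by (simp add: phi_fgen gen_op_YG2)
  qed
qed

lemma sum2pt:
  assumes "finite S" "a \<noteq> b" "\<forall>k\<in>S. k \<noteq> a \<longrightarrow> k \<noteq> b \<longrightarrow> F k = (0::'a::comm_monoid_add)"
  shows "sum F S = (if a \<in> S then F a else 0) + (if b \<in> S then F b else 0)"
proof -
  have "sum F S = sum F (S \<inter> {a, b})"
    by (rule sum.mono_neutral_right) (use assms in auto)
  also have "\<dots> = (if a \<in> S then F a else 0) + (if b \<in> S then F b else 0)"
    using assms(2) by (cases "a \<in> S"; cases "b \<in> S") (auto simp: Int_insert_right)
  finally show ?thesis .
qed

lemma Sser_apply:
  "Sser \<epsilon> 1 1 m v n = (if m = 1 then v n else if m = 0 then - \<epsilon> * of_int n * v n else 0)"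
  "Sser \<epsilon> 1 2 m v n = (if m = 0 then v (n + 1) else 0)"
  "Sser \<epsilon> 2 1 m v n = (if m = 0 then - v (n - 1) else 0)"
  "Sser \<epsilon> 2 2 m v n = 0"
  by (auto simp: Sser_def op_scal_def op_z_def op_d_def op_zinv_def)

lemma phi_T11: "phi \<epsilon> (Tser (1,-1) 1 1 m) = Sser \<epsilon> 1 1 m"
  unfolding Tser11 by (simp add: fun_eq_iff phi_g1 Sser_apply)

lemma phi_T12: "phi \<epsilon> (Tser (1,-1) 1 2 m) = Sser \<epsilon> 1 2 m"
proof (rule ext, rule ext)
  fix v n
  have "phi \<epsilon> (Tser (1,-1) 1 2 m) v n
     = (\<Sum>k\<in>{m+1..1}. phi \<epsilon> (g1_ser (1,-1) k) (phi \<epsilon> (e_ser (m - k)) v) n)"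
    unfolding Tser12 lmul_ub[OF ub_g1 ub_e] by (simp add: phi_sum_apply phi_mult_apply)
  also have "\<dots> = (if 0 \<in> {m+1..1} then - \<epsilon> * of_int n * phi \<epsilon> (e_ser m) v n else 0)
       + (if 1 \<in> {m+1..1} then phi \<epsilon> (e_ser (m - 1)) v n else 0)"
    by (subst sum2pt[of _ 0 1]) (auto simp: phi_g1)
  also have "\<dots> = Sser \<epsilon> 1 2 m v n"
  proof -
    consider "m \<ge> 1" | "m = 0" | "m \<le> -1" by linarith
    then show ?thesis
    proof cases
      case 3
      then have "nat (- (m - 1) - 1) = Suc (nat (- m - 1))" by simp
      with 3 show ?thesis by (simp add: phi_e Sser_apply)
    qed (auto simp: phi_e Sser_apply)
  qed
  finally show "phi \<epsilon> (Tser (1,-1) 1 2 m) v n = Sser \<epsilon> 1 2 m v n" .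
qed

lemma phi_T21: "phi \<epsilon> (Tser (1,-1) 2 1 m) = Sser \<epsilon> 2 1 m"
proof (rule ext, rule ext)
  fix v n
  have "phi \<epsilon> (Tser (1,-1) 2 1 m) v n
     = (\<Sum>k\<in>{m-1..-1}. phi \<epsilon> (f_ser k) (phi \<epsilon> (g1_ser (1,-1) (m - k)) v) n)"
    unfolding Tser21 lmul_ub[OF ub_f ub_g1] by (simp add: phi_sum_apply phi_mult_apply)
  also have "\<dots> = (if m - 1 \<in> {m-1..-1} then phi \<epsilon> (f_ser (m - 1)) v n else 0)
       + (if m \<in> {m-1..-1} then phi \<epsilon> (f_ser m) (\<lambda>n. - \<epsilon> * of_int n * v n) n else 0)"
    by (subst sum2pt[of _ "m - 1" m]) (auto simp: phi_g1_fun phi_apply_zero)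
  also have "\<dots> = Sser \<epsilon> 2 1 m v n"
  proof -
    consider "m \<ge> 1" | "m = 0" | "m \<le> -1" by linarith
    then show ?thesis
    proof cases
      case 3
      then have "nat (- (m - 1) - 1) = Suc (nat (- m - 1))" by simp
      with 3 show ?thesis by (simp add: phi_f Sser_apply algebra_simps)
    qed (auto simp: phi_f Sser_apply)
  qed
  finally show "phi \<epsilon> (Tser (1,-1) 2 1 m) v n = Sser \<epsilon> 2 1 m v n" .
qed

lemma ub_T21: "\<forall>k>0. Tser (1,-1) 2 1 k = 0"
  unfolding Tser21 using lmul_ub_zero[OF ub_f ub_g1] by simp

lemma phi_T22: "phi \<epsilon> (Tser (1,-1) 2 2 m) = Sser \<epsilon> 2 2 m"
proof (rule ext, rule ext)
  fix v n
  have "phi \<epsilon> (Tser (1,-1) 2 2 m) v n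
     = (\<Sum>k\<in>{m+1..0}. phi \<epsilon> (Tser (1,-1) 2 1 k) (phi \<epsilon> (e_ser (m - k)) v) n)
       + phi \<epsilon> (g2_ser (1,-1) m) v n"
    unfolding Tser22 lmul_ub[OF ub_T21 ub_e]
    by (simp add: phi_sum_apply phi_mult_apply phi_add)
  also have "\<dots> = (if 0 \<in> {m+1..0} then - phi \<epsilon> (e_ser m) v (n - 1) else 0)
       + phi \<epsilon> (g2_ser (1,-1) m) v n"
    by (subst sum.mono_neutral_right[of "{m+1..0}" "{m+1..0} \<inter> {0}"])
       (auto simp: phi_T21 Sser_apply Int_insert_right)
  also have "\<dots> = Sser \<epsilon> 2 2 m v n"
  proof -
    consider "m \<ge> 0" | "m = -1" | "m < -1" by linarith
    then show ?thesis
    proof cases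
      case 3
      then show ?thesis by (simp add: phi_e phi_g2 Sser_apply)
    qed (auto simp: phi_e phi_g2 Sser_apply)
  qed
  finally show "phi \<epsilon> (Tser (1,-1) 2 2 m) v n = Sser \<epsilon> 2 2 m v n" .
qed

lemma Sser_fun:
  "Sser \<epsilon> 1 1 m = (\<lambda>v n. if m = 1 then v n else if m = 0 then - \<epsilon> * of_int n * v n else 0)"
  "Sser \<epsilon> 1 2 m = (\<lambda>v n. if m = 0 then v (n + 1) else 0)"
  "Sser \<epsilon> 2 1 m = (\<lambda>v n. if m = 0 then - v (n - 1) else 0)"
  "Sser \<epsilon> 2 2 m = (\<lambda>v n. 0)"
  by (auto simp: fun_eq_iff Sser_apply)

lemma RTT_S:
  assumes "i1 \<in> {1,2}" "i2 \<in> {1,2}" "j1 \<in> {1,2}" "j2 \<in> {1,2}"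
  shows "Sser \<epsilon> i1 j1 (a-1) (Sser \<epsilon> i2 j2 b v) n - Sser \<epsilon> i1 j1 a (Sser \<epsilon> i2 j2 (b-1) v) n
           - \<epsilon> * Sser \<epsilon> i2 j1 a (Sser \<epsilon> i1 j2 b v) n
       = Sser \<epsilon> i2 j2 b (Sser \<epsilon> i1 j1 (a-1) v) n - Sser \<epsilon> i2 j2 (b-1) (Sser \<epsilon> i1 j1 a v) n
           - Sser \<epsilon> i2 j1 b (Sser \<epsilon> i1 j2 a (\<lambda>n. \<epsilon> * v n)) n"
  using assms by (auto simp: Sser_fun algebra_simps)

lemma sum_K_delta:
  "finite S \<Longrightarrow> K0 \<in> S \<Longrightarrow> (\<Sum>K\<in>S. if K = K0 then X else (0::'a::comm_monoid_add)) = X"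
  by (simp add: sum.delta)

lemma M12:
  fixes T :: "nat \<Rightarrow> nat \<Rightarrow> int \<Rightarrow> 'a::ring_1"
  assumes "I \<in> {1,2}\<times>{1,2}" "J \<in> {1,2}\<times>{1,2}"
  shows "mmul4 (T1 T) (T2 T) I J c d = T (fst I) (fst J) c * T (snd I) (snd J) d"
proof -
  have per: "lmul2v (T1 T I K) (T2 T K J) c d
      = (if K = (fst J, snd I) then T (fst I) (fst J) c * T (snd I) (snd J) d else 0)" for K
  proof -
    have per: "lmul2v (T1 T I K) (T2 T K J) c d = (\<Sum>(c',d')\<in>{(c,0)}. T1 T I K c' d' * T2 T K J (c - c') (d - d'))"
      by (rule lmul2v_finite) (auto simp: T1_def T2_def split: if_splits)
    also have "\<dots> = T1 T I K c 0 * T2 T K J 0 d" by simp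
    also have "\<dots> = (if K = (fst J, snd I) then T (fst I) (fst J) c * T (snd I) (snd J) d else 0)"
      by (cases K) (auto simp: T1_def T2_def)
    finally show ?thesis .
  qed
  show ?thesis unfolding mmul4_def per by (rule sum_K_delta) (use assms in auto)
qed

lemma M21:
  fixes T :: "nat \<Rightarrow> nat \<Rightarrow> int \<Rightarrow> 'a::ring_1"
  assumes "I \<in> {1,2}\<times>{1,2}" "J \<in> {1,2}\<times>{1,2}"
  shows "mmul4 (T2 T) (T1 T) I J c d = T (snd I) (snd J) d * T (fst I) (fst J) c"
proof -
  have per: "lmul2v (T2 T I K) (T1 T K J) c d
      = (if K = (fst I, snd J) then T (snd I) (snd J) d * T (fst I) (fst J) c else 0)" for K
  proof -
    have per: "lmul2v (T2 T I K) (T1 T K J) c d = (\<Sum>(c',d')\<in>{(0,d)}. T2 T I K c' d' * T1 T K J (c - c') (d - d'))"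
      by (rule lmul2v_finite) (auto simp: T1_def T2_def split: if_split_asm)
    also have "\<dots> = T2 T I K 0 d * T1 T K J c 0" by simp
    also have "\<dots> = (if K = (fst I, snd J) then T (snd I) (snd J) d * T (fst I) (fst J) c else 0)"
      by (cases K) (simp add: T1_def T2_def)
    finally show ?thesis .
  qed
  show ?thesis unfolding mmul4_def per by (rule sum_K_delta) (use assms in auto)
qed

lemma Rnum_supp: "Rnum \<epsilon> I K c d \<noteq> 0 \<Longrightarrow> (c,d) \<in> {(1,0),(0,1),(0,0)}"
  unfolding Rnum_def by (simp split: if_splits)

lemma Rnum_10: "Rnum \<epsilon> I K 1 0 = (if I = K then 1 else 0)"
  unfolding Rnum_def by simp
lemma Rnum_01: "Rnum \<epsilon> I K 0 1 = (if I = K then -1 else 0)"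
  unfolding Rnum_def by simp
lemma Rnum_00: "Rnum \<epsilon> I K 0 0 = - (if K = (snd I, fst I) then fscal \<epsilon> else 0)"
proof -
  have "(fst I = snd K \<and> snd I = fst K) = (K = (snd I, fst I))" by (auto simp: prod_eq_iff)
  then show ?thesis unfolding Rnum_def by simp
qed
lemmas Rnum_vals = Rnum_10 Rnum_01 Rnum_00

lemma RM:
  fixes M :: "nat \<times> nat \<Rightarrow> nat \<times> nat \<Rightarrow> int \<Rightarrow> int \<Rightarrow> 'g freealg"
  assumes "I \<in> {1,2}\<times>{1,2}"
  shows "mmul4 (Rnum \<epsilon>) M I J a b = M I J (a-1) b - M I J a (b-1) - fscal \<epsilon> * M (snd I, fst I) J a b"
proof -
  have "lmul2v (Rnum \<epsilon> I K) (M K J) a b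
      = (if K = I then M I J (a-1) b - M I J a (b-1) else 0)
        - (if K = (snd I, fst I) then fscal \<epsilon> * M (snd I, fst I) J a b else 0)" for K
  proof -
    have "lmul2v (Rnum \<epsilon> I K) (M K J) a b
        = (\<Sum>(c,d)\<in>{(1,0),(0,1),(0,0)}. Rnum \<epsilon> I K c d * M K J (a - c) (b - d))"
      by (rule lmul2v_finite) (auto dest: Rnum_supp)
    also have "\<dots> = Rnum \<epsilon> I K 1 0 * M K J (a-1) b + Rnum \<epsilon> I K 0 1 * M K J a (b-1)
                 + Rnum \<epsilon> I K 0 0 * M K J a b" by simp
    also have "\<dots> = (if K = I then M I J (a-1) b - M I J a (b-1) else 0)
        - (if K = (snd I, fst I) then fscal \<epsilon> * M (snd I, fst I) J a b else 0)"
      unfolding Rnum_vals by auto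
    finally show ?thesis .
  qed
  moreover have "(snd I, fst I) \<in> {1,2}\<times>{1,2}" using assms by auto
  ultimately show ?thesis unfolding mmul4_def using assms
    by (simp add: sum_subtractf sum_K_delta del: insert_iff)
qed

lemma MR:
  fixes M :: "nat \<times> nat \<Rightarrow> nat \<times> nat \<Rightarrow> int \<Rightarrow> int \<Rightarrow> 'g freealg"
  assumes "J \<in> {1,2}\<times>{1,2}"
  shows "mmul4 M (Rnum \<epsilon>) I J a b = M I J (a-1) b - M I J a (b-1) - M I (snd J, fst J) a b * fscal \<epsilon>"
proof -
  have "lmul2v (M I K) (Rnum \<epsilon> K J) a b
      = (if K = J then M I J (a-1) b - M I J a (b-1) else 0)
        - (if K = (snd J, fst J) then M I (snd J, fst J) a b * fscal \<epsilon> else 0)" for K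
  proof -
    have "lmul2v (M I K) (Rnum \<epsilon> K J) a b
        = (\<Sum>(c,d)\<in>{(a-1,b),(a,b-1),(a,b)}. M I K c d * Rnum \<epsilon> K J (a - c) (b - d))"
      by (rule lmul2v_finite) (auto dest: Rnum_supp)
    also have "\<dots> = M I K (a-1) b * Rnum \<epsilon> K J 1 0 + M I K a (b-1) * Rnum \<epsilon> K J 0 1
                 + M I K a b * Rnum \<epsilon> K J 0 0" by simp
    also have "\<dots> = (if K = J then M I J (a-1) b - M I J a (b-1) else 0)
        - (if K = (snd J, fst J) then M I (snd J, fst J) a b * fscal \<epsilon> else 0)"
    proof -
      have sw: "(J = (snd K, fst K)) = (K = (snd J, fst J))" by (auto simp: prod_eq_iff)
      show ?thesis unfolding Rnum_vals sw
        by (cases "K = J"; cases "K = (snd J, fst J)") simp_all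
    qed
    finally show ?thesis .
  qed
  moreover have "(snd J, fst J) \<in> {1,2}\<times>{1,2}" using assms by auto
  ultimately show ?thesis unfolding mmul4_def using assms
    by (simp add: sum_subtractf sum_K_delta del: insert_iff)
qed

lemma phi_T: "i \<in> {1,2} \<Longrightarrow> j \<in> {1,2} \<Longrightarrow> phi \<epsilon> (Tser (1,-1) i j m) = Sser \<epsilon> i j m"
  using phi_T11 phi_T12 phi_T21 phi_T22 by auto

lemma phi_fscal: "phi \<epsilon> (fscal c) = op_scal c"
  by (simp add: fscal_def phi_single word_op_zero op_scal_def fun_eq_iff)

lemma phi_fscal_left: "phi \<epsilon> (fscal c * X) v n = c * phi \<epsilon> X v n"
  by (simp add: phi_mult_apply phi_fscal op_scal_def)

lemma phi_fscal_right: "phi \<epsilon> (X * fscal c) v n = phi \<epsilon> X (\<lambda>n. c * v n) n"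
  by (simp add: phi_mult_apply phi_fscal op_scal_def)

lemma phi_diff_apply: "phi \<epsilon> (p - q) v n = phi \<epsilon> p v n - phi \<epsilon> q v n"
  by (rule hom_diff[OF alg_hom_phi])

lemma op_scal0: "op_scal 0 = (\<lambda>v n. 0)"
  by (simp add: op_scal_def fun_eq_iff)

lemma phi_RTT:
  assumes I: "I \<in> {1,2}\<times>{1,2}" and J: "J \<in> {1,2}\<times>{1,2}"
  shows "phi \<epsilon> (mmul4 (Rnum \<epsilon>) (mmul4 (T1 (Tser (1,-1))) (T2 (Tser (1,-1)))) I J a b
      - mmul4 (mmul4 (T2 (Tser (1,-1))) (T1 (Tser (1,-1)))) (Rnum \<epsilon>) I J a b) = op_scal 0"
proof -
  obtain i1 i2 where Ii: "I = (i1, i2)" "i1 \<in> {1,2}" "i2 \<in> {1,2}" using I by auto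
  obtain j1 j2 where Jj: "J = (j1, j2)" "j1 \<in> {1,2}" "j2 \<in> {1,2}" using J by auto
  let ?T = "Tser (1,-1)"
  have sI: "(snd I, fst I) \<in> {1,2}\<times>{1,2}" and sJ: "(snd J, fst J) \<in> {1,2}\<times>{1,2}"
    using I J by auto
  have e1: "mmul4 (Rnum \<epsilon>) (mmul4 (T1 ?T) (T2 ?T)) I J a b
     = ?T i1 j1 (a-1) * ?T i2 j2 b - ?T i1 j1 a * ?T i2 j2 (b-1) - fscal \<epsilon> * (?T i2 j1 a * ?T i1 j2 b)"
    unfolding RM[OF I] M12[OF I J] M12[OF sI J] using Ii Jj by simp
  have e2: "mmul4 (mmul4 (T2 ?T) (T1 ?T)) (Rnum \<epsilon>) I J a b
     = ?T i2 j2 b * ?T i1 j1 (a-1) - ?T i2 j2 (b-1) * ?T i1 j1 a - (?T i2 j1 b * ?T i1 j2 a) * fscal \<epsilon>"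
    unfolding MR[OF J] M21[OF I J] M21[OF I sJ] using Ii Jj by simp
  show ?thesis
    unfolding e1 e2 op_scal0
    using RTT_S[OF Ii(2,3) Jj(2,3), of \<epsilon> a b]
    by (simp add: fun_eq_iff phi_diff_apply phi_mult_apply phi_fscal op_scal_def
        phi_T[OF Ii(2) Jj(2)] phi_T[OF Ii(3) Jj(3)] phi_T[OF Ii(3) Jj(2)] phi_T[OF Ii(2) Jj(3)])
qed

lemma ub_T12: "\<forall>k>0. Tser (1,-1) 1 2 k = 0"
  unfolding Tser12 using lmul_ub_zero[OF ub_g1 ub_e] by simp

lemma ub_lshift21: "\<forall>j>0. lshift \<epsilon> (Tser (1,-1) 2 1) j = 0"
  using lshift_ub[OF ub_T21] by simp

lemma phi_lshift21: "phi \<epsilon> (lshift \<epsilon> (Tser (1,-1) 2 1) j) v m = (if j = 0 then - v (m - 1) else 0)"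
proof -
  have "phi \<epsilon> (lshift \<epsilon> (Tser (1,-1) 2 1) j) v m
     = (\<Sum>l\<in>{j..0}. ((of_int l gchoose nat (l - j)) * (- \<epsilon>) ^ nat (l - j)) * Sser \<epsilon> 2 1 l v m)"
    unfolding lshift_ub[OF ub_T21]
    by (simp add: phi_sum_apply phi_fscal_left phi_T21)
  also have "\<dots> = (if 0 \<in> {j..0} then ((of_int 0 gchoose nat (0 - j)) * (- \<epsilon>) ^ nat (0 - j)) * Sser \<epsilon> 2 1 0 v m else 0)"
    by (subst sum.mono_neutral_right[of "{j..0}" "{j..0} \<inter> {0}"])
       (auto simp: Sser_apply Int_insert_right)
  also have "\<dots> = (if j = 0 then - v (m - 1) else 0)"
    by (auto simp: Sser_apply gbinomial_0_left)
  finally show ?thesis .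
qed

lemma phi_qdet: "phi \<epsilon> (qdet_ser \<epsilon> (1,-1) n - lone n) = op_scal 0"
proof -
  have A: "phi \<epsilon> (lmul (Tser (1,-1) 2 2) (lshift \<epsilon> (Tser (1,-1) 1 1)) n) v m = 0" for v m
    unfolding lmul_def by (simp add: phi_sum_apply phi_mult_apply phi_T22 Sser_apply)
  have B: "phi \<epsilon> (lmul (Tser (1,-1) 1 2) (lshift \<epsilon> (Tser (1,-1) 2 1)) n) v m
      = (if n = 0 then - v m else 0)" for v m
  proof -
    have "phi \<epsilon> (lmul (Tser (1,-1) 1 2) (lshift \<epsilon> (Tser (1,-1) 2 1)) n) v m
       = (\<Sum>k\<in>{n..0}. Sser \<epsilon> 1 2 k (phi \<epsilon> (lshift \<epsilon> (Tser (1,-1) 2 1) (n - k)) v) m)"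
      unfolding lmul_ub[OF ub_T12 ub_lshift21]
      by (simp add: phi_sum_apply phi_mult_apply phi_T12)
    also have "\<dots> = (if 0 \<in> {n..0} then phi \<epsilon> (lshift \<epsilon> (Tser (1,-1) 2 1) n) v (m + 1) else 0)"
      by (subst sum.mono_neutral_right[of "{n..0}" "{n..0} \<inter> {0}"])
         (auto simp: Sser_apply Int_insert_right)
    also have "\<dots> = (if n = 0 then - v m else 0)"
      by (auto simp: phi_lshift21)
    finally show ?thesis .
  qed
  have C: "phi \<epsilon> (lone n) v m = (if n = 0 then v m else 0)" for v m
    by (simp add: lone_def phi_one_apply phi_zero_apply)
  show ?thesis
    unfolding qdet_ser_def op_scal0
    by (simp add: fun_eq_iff phi_diff_apply A B C)
qed

lemma phi_rels: "r \<in> yangian_rels \<epsilon> (1,-1) \<Longrightarrow> phi \<epsilon> r = op_scal 0"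
  unfolding yangian_rels_def using phi_RTT phi_qdet by auto

lemma exist: "yangian_map_to_diff \<epsilon> (1, -1) (phi \<epsilon>)
           \<and> (\<forall>i\<in>{1,2}. \<forall>j\<in>{1,2}. \<forall>m. phi \<epsilon> (Tser (1, -1) i j m) = Sser \<epsilon> i j m)"
  unfolding yangian_map_to_diff_def
  using alg_hom_phi phi_diffops phi_rels phi_T by blast

theorem proposition4p5:
  fixes \<epsilon> :: complex
  shows "\<exists>!\<phi>. yangian_map_to_diff \<epsilon> (1, -1) \<phi>
           \<and> (\<forall>i\<in>{1,2}. \<forall>j\<in>{1,2}. \<forall>m. \<phi> (Tser (1, -1) i j m) = Sser \<epsilon> i j m)"
proof (rule ex1I[of _ "phi \<epsilon>"])
  show "yangian_map_to_diff \<epsilon> (1, -1) (phi \<epsilon>)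
           \<and> (\<forall>i\<in>{1,2}. \<forall>j\<in>{1,2}. \<forall>m. phi \<epsilon> (Tser (1, -1) i j m) = Sser \<epsilon> i j m)"
    by (rule exist)
next
  fix \<psi>
  assume a: "yangian_map_to_diff \<epsilon> (1, -1) \<psi>
           \<and> (\<forall>i\<in>{1,2}. \<forall>j\<in>{1,2}. \<forall>m. \<psi> (Tser (1, -1) i j m) = Sser \<epsilon> i j m)"
  then have h: "alg_hom \<psi>" by (simp add: yangian_map_to_diff_def)
  interpret two_homs \<psi> "phi \<epsilon>" using h alg_hom_phi by unfold_locales
  show "\<psi> = phi \<epsilon>"
    by (rule uniq) (use a exist in auto)
qed

end
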